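(* Let $P$ be a Poisson bracket on $\mathbb{R}^n$, let $\ast_\nu=\sum_r\nu^rC_r$ be a star-product on $(\mathbb{R}^n,P)$, and let $\rho_1$ be the first cochain of its associated sun-product. Then $\rho_1$ is (the restriction to $\mathsf{Pol}$ of) a differential operator vanishing on constants, and its Hochschild coboundary satisfies $\delta\rho_1=P-C_1$.
   Context: $\mathsf{N}=C^\infty(\mathbb{R}^n)$, coordinates $x_1,\dots,x_n$, $\mathsf{Pol}=\mathbb{R}[x_1,\dots,x_n]$. A (differential) star-product on $(\mathbb{R}^n,P)$ is a bilinear map $f\ast_\nu g=\sum_{r\ge0}\nu^rC_r(f,g)$ from $\mathsf{N}\times\mathsf{N}$ to $\mathsf{N}[[\nu]]$, extended $\mathbb{R}[[\nu]]$-bilinearly, where the $C_r$ are bidifferential operators with: $C_0(f,g)=fg$; $C_r(c,f)=C_r(f,c)=0$ for $r\ge1$ and constants $c$; associativity $\sum_{s+t=r}C_s(C_t(f,g),h)=\sum_{s+t=r}C_s(f,C_t(g,h))$ for all $r\ge0$; and $C_1(f,g)-C_1(g,f)=2P(f,g)$. The sun-product cochains $\rho_r:\mathsf{Pol}\to\mathsf{N}$ are the linear maps determined by $\rho(1)=1$ and $\rho(x_{i_1}\cdots x_{i_k})=\frac1{k!}\sum_{\sigma\in S_k}x_{i_{\sigma(1)}}\ast_\nu\cdots\ast_\nu x_{i_{\sigma(k)}}=\sum_{r\ge0}\nu^r\rho_r(x_{i_1}\cdots x_{i_k})$. The Hochschild coboundary of a linear map $\psi$ is $\delta\psi(f,g)=f\psi(g)-\psi(fg)+\psi(f)g$;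 $P$ is regarded as the bilinear map $(f,g)\mapsto P(f,g)$. *)

theory Defs
  imports "HOL-Analysis.Analysis" "HOL-Library.Poly_Mapping"
          "HOL-Combinatorics.Multiset_Permutations"
begin

type_synonym 'n fn = "real ^ 'n \<Rightarrow> real"

definition pd :: "'n::finite \<Rightarrow> 'n fn \<Rightarrow> 'n fn" where
  "pd i f = (\<lambda>x. frechet_derivative f (at x) (axis i 1))"

fun pdl :: "'n::finite list \<Rightarrow> 'n fn \<Rightarrow> 'n fn" where
  "pdl [] f = f"
| "pdl (i # is) f = pd i (pdl is f)"

definition smooth :: "'n::finite fn \<Rightarrow> bool" where
  "smooth f \<longleftrightarrow> (\<forall>is x. pdl is f differentiable (at x))"

definition diff_op :: "('n::finite fn \<Rightarrow> 'n fn) \<Rightarrow> bool" where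
  "diff_op D \<longleftrightarrow> (\<exists>S a. finite S \<and> (\<forall>is\<in>S. smooth (a is)) \<and>
     (\<forall>f. smooth f \<longrightarrow> D f = (\<lambda>x. \<Sum>is\<in>S. a is x * pdl is f x)))"

definition bidiff_op :: "('n::finite fn \<Rightarrow> 'n fn \<Rightarrow> 'n fn) \<Rightarrow> bool" where
  "bidiff_op B \<longleftrightarrow> (\<exists>S a. finite S \<and> (\<forall>p\<in>S. smooth (a p)) \<and>
     (\<forall>f g. smooth f \<longrightarrow> smooth g \<longrightarrow>
        B f g = (\<lambda>x. \<Sum>(is, js)\<in>S. a (is, js) x * pdl is f x * pdl js g x)))"

definition poisson_bracket :: "('n::finite fn \<Rightarrow> 'n fn \<Rightarrow> 'n fn) \<Rightarrow> bool" where
  "poisson_bracket P \<longleftrightarrow>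
     (\<forall>f g. smooth f \<longrightarrow> smooth g \<longrightarrow> smooth (P f g)) \<and>
     (\<forall>f g h a b. smooth f \<longrightarrow> smooth g \<longrightarrow> smooth h \<longrightarrow>
        P (\<lambda>x. a * f x + b * g x) h = (\<lambda>x. a * P f h x + b * P g h x)) \<and>
     (\<forall>f g. smooth f \<longrightarrow> smooth g \<longrightarrow> P f g = (\<lambda>x. - P g f x)) \<and>
     (\<forall>f g h. smooth f \<longrightarrow> smooth g \<longrightarrow> smooth h \<longrightarrow>
        P f (\<lambda>x. g x * h x) = (\<lambda>x. P f g x * h x + g x * P f h x)) \<and>
     (\<forall>f g h. smooth f \<longrightarrow> smooth g \<longrightarrow> smooth h \<longrightarrow>
        (\<lambda>x. P f (P g h) x + P g (P h f) x + P h (P f g) x) = (\<lambda>x. 0))"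

text \<open>Differential star-product f *_nu g = sum_r nu^r C r f g on (R^n, P).\<close>
definition star_product :: "('n::finite fn \<Rightarrow> 'n fn \<Rightarrow> 'n fn) \<Rightarrow>
    (nat \<Rightarrow> 'n fn \<Rightarrow> 'n fn \<Rightarrow> 'n fn) \<Rightarrow> bool" where
  "star_product P C \<longleftrightarrow>
     (\<forall>r. bidiff_op (C r)) \<and>
     (\<forall>f g. smooth f \<longrightarrow> smooth g \<longrightarrow> C 0 f g = (\<lambda>x. f x * g x)) \<and>
     (\<forall>r c f. r \<ge> 1 \<longrightarrow> smooth f \<longrightarrow>
        C r (\<lambda>_. c) f = (\<lambda>_. 0) \<and> C r f (\<lambda>_. c) = (\<lambda>_. 0)) \<and>
     (\<forall>r f g h. smooth f \<longrightarrow> smooth g \<longrightarrow> smooth h \<longrightarrow>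
        (\<lambda>x. \<Sum>s\<le>r. C s (C (r - s) f g) h x) = (\<lambda>x. \<Sum>s\<le>r. C s f (C (r - s) g h) x)) \<and>
     (\<forall>f g. smooth f \<longrightarrow> smooth g \<longrightarrow>
        (\<lambda>x. C 1 f g x - C 1 g f x) = (\<lambda>x. 2 * P f g x))"

text \<open>nu^r-coefficient of the (right-nested) star product f1 * (f2 * ( ... * 1)).\<close>
fun starw :: "(nat \<Rightarrow> 'n fn \<Rightarrow> 'n fn \<Rightarrow> 'n fn) \<Rightarrow> 'n fn list \<Rightarrow> nat \<Rightarrow> 'n fn" where
  "starw C [] r = (if r = 0 then (\<lambda>_. 1) else (\<lambda>_. 0))"
| "starw C (f # fs) r = (\<lambda>x. \<Sum>s\<le>r. C s f (starw C fs (r - s)) x)"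

definition coord :: "'n::finite \<Rightarrow> 'n fn" where
  "coord i = (\<lambda>x. x $ i)"

text \<open>Pol = R[x_1..x_n]: monomials are multisets of indices, polynomials are
  finitely supported coefficient maps (multiplication = convolution).\<close>
type_synonym 'n pol = "'n multiset \<Rightarrow>\<^sub>0 real"

definition poly_eval :: "'n::finite pol \<Rightarrow> 'n fn" where
  "poly_eval p = (\<lambda>x. \<Sum>M\<in>Poly_Mapping.keys p. Poly_Mapping.lookup p M * (\<Prod>i\<in>#M. x $ i))"

text \<open>rho_r on a monomial: symmetrisation over orderings of its letters
  (averaging over S_k equals averaging over the distinct words with that multiset).\<close>
definition rho_mon :: "(nat \<Rightarrow> 'n::finite fn \<Rightarrow> 'n fn \<Rightarrow> 'n fn) \<Rightarrow> nat \<Rightarrow> 'n multiset \<Rightarrow> 'n fn" where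
  "rho_mon C r M = (\<lambda>x. (\<Sum>w\<in>permutations_of_multiset M. starw C (map coord w) r x)
                          / real (card (permutations_of_multiset M)))"

definition rho :: "(nat \<Rightarrow> 'n::finite fn \<Rightarrow> 'n fn \<Rightarrow> 'n fn) \<Rightarrow> nat \<Rightarrow> 'n pol \<Rightarrow> 'n fn" where
  "rho C r p = (\<lambda>x. \<Sum>M\<in>Poly_Mapping.keys p. Poly_Mapping.lookup p M * rho_mon C r M x)"

end

theory Submission
  imports Defs
begin


lemma pdl_append: "pdl (is @ js) f = pdl is (pdl js f)"
  by (induction "is") auto

lemma smooth_diff: "smooth f \<Longrightarrow> f differentiable (at x)"
  unfolding smooth_def by (metis pdl.simps(1))

lemma smooth_pdl: "smooth f \<Longrightarrow> smooth (pdl is f)"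
  unfolding smooth_def by (metis pdl_append)

lemma smooth_pd: "smooth f \<Longrightarrow> smooth (pd i f)"
  using smooth_pdl[of f "[i]"] by simp

lemma smoothI:
  assumes "\<And>x. f differentiable (at x)" "\<And>i. smooth (pd i f)"
  shows "smooth f"
  unfolding smooth_def
proof (intro allI)
  fix "is" x show "pdl is f differentiable (at x)"
  proof (cases "is" rule: rev_exhaust)
    case Nil then show ?thesis using assms by simp
  next
    case (snoc js i)
    then have "pdl is f = pdl js (pd i f)" using pdl_append[of js "[i]"] by simp
    then show ?thesis using assms(2)[of i] unfolding smooth_def by simp
  qed
qed

lemma pd_eq:
  assumes "\<And>x. (f has_derivative f' x) (at x)"
  shows "pd i f = (\<lambda>x. f' x (axis i 1))"
  unfolding pd_def using frechet_derivative_at[OF assms] by metis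

lemma hasd: "f differentiable (at x) \<Longrightarrow> (f has_derivative frechet_derivative f (at x)) (at x)"
  using frechet_derivative_works by blast

lemma pd_add:
  assumes "\<And>x. f differentiable (at x)" "\<And>x. g differentiable (at x)"
  shows "pd i (\<lambda>x. f x + g x) = (\<lambda>x. pd i f x + pd i g x)"
proof -
  have "pd i (\<lambda>x. f x + g x) = (\<lambda>x. (\<lambda>h. frechet_derivative f (at x) h + frechet_derivative g (at x) h) (axis i 1))"
    by (rule pd_eq, rule has_derivative_add, rule hasd[OF assms(1)], rule hasd[OF assms(2)])
  then show ?thesis unfolding pd_def by simp
qed

lemma pd_mult:
  assumes "\<And>x. f differentiable (at x)" "\<And>x. g differentiable (at x)"
  shows "pd i (\<lambda>x. f x * g x) = (\<lambda>x. pd i f x * g x + f x * pd i g x)"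
proof -
  have "pd i (\<lambda>x. f x * g x) = (\<lambda>x. (\<lambda>h. f x * frechet_derivative g (at x) h + frechet_derivative f (at x) h * g x) (axis i 1))"
    by (rule pd_eq, rule has_derivative_mult, rule hasd[OF assms(1)], rule hasd[OF assms(2)])
  then show ?thesis unfolding pd_def by (simp add: algebra_simps)
qed

lemma pd_const: "pd i (\<lambda>x. c) = (\<lambda>x. 0)"
proof -
  have "pd i (\<lambda>x::real^'a. c) = (\<lambda>x. (\<lambda>h. 0) (axis i (1::real)))"
    by (rule pd_eq, rule has_derivative_const)
  then show ?thesis by simp
qed

lemma pd_coord: "pd i (coord j) = (\<lambda>x. if i = j then 1 else 0)"
proof -
  have "pd i (coord j) = (\<lambda>x. (\<lambda>h. h $ j) (axis i (1::real)))"
    unfolding coord_def by (rule pd_eq, rule bounded_linear_imp_has_derivative, rule bounded_linear_vec_nth)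
  then show ?thesis by (simp add: axis_def)
qed

lemma smooth_const: "smooth (\<lambda>x. c)"
proof -
  have "pdl is (\<lambda>x::real^'a. c) = (\<lambda>x. if is = [] then c else 0)" for "is"
    by (induction "is") (auto simp: pd_const)
  then show ?thesis unfolding smooth_def by simp
qed

lemma smooth_coord: "smooth (coord j)"
  apply (rule smoothI)
   apply (simp add: coord_def bounded_linear_imp_differentiable[OF bounded_linear_vec_nth])
  apply (simp add: pd_coord smooth_const)
  done

lemma pdl_add_weak:
  assumes "\<And>js x. length js < length is \<Longrightarrow> pdl js f differentiable (at x) \<and> pdl js g differentiable (at x)"
  shows "pdl is (\<lambda>x. f x + g x) = (\<lambda>x. pdl is f x + pdl is g x)"
  using assms
proof (induction "is")
  case Nil then show ?case by simp
next
  case (Cons i "is")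
  have "pdl is (\<lambda>x. f x + g x) = (\<lambda>x. pdl is f x + pdl is g x)"
    using Cons.IH Cons.prems by force
  then show ?case using Cons.prems[of "is"] by (simp add: pd_add)
qed

lemma smooth_add: assumes "smooth f" "smooth g" shows "smooth (\<lambda>x. f x + g x)"
  unfolding smooth_def
proof (intro allI)
  fix "is" x
  have "pdl is (\<lambda>x. f x + g x) = (\<lambda>x. pdl is f x + pdl is g x)"
    by (rule pdl_add_weak) (use assms in \<open>auto simp: smooth_def\<close>)
  then show "pdl is (\<lambda>x. f x + g x) differentiable (at x)"
    using assms by (auto simp: smooth_def intro!: differentiable_add)
qed

lemma pdl_add: "smooth f \<Longrightarrow> smooth g \<Longrightarrow> pdl is (\<lambda>x. f x + g x) = (\<lambda>x. pdl is f x + pdl is g x)"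
  by (rule pdl_add_weak) (auto simp: smooth_def)

lemma smooth_mult_aux:
  "\<forall>(f::'n::finite fn) g is. smooth f \<longrightarrow> smooth g \<longrightarrow> length is \<le> n \<longrightarrow> (\<forall>x. pdl is (\<lambda>x. f x * g x) differentiable (at x))"
proof (induction n)
  case 0
  then show ?case by (auto intro!: differentiable_mult simp: smooth_diff)
next
  case (Suc n)
  show ?case
  proof (intro allI impI)
    fix f g :: "'n fn" and "is" :: "'n list" and x
    assume f: "smooth f" and g: "smooth g" and l: "length is \<le> Suc n"
    show "pdl is (\<lambda>x. f x * g x) differentiable (at x)"
    proof (cases "is" rule: rev_exhaust)
      case Nil then show ?thesis using f g by (auto intro!: differentiable_mult simp: smooth_diff)
    next
      case (snoc js i)
      have ljs: "length js \<le> n" using l snoc by simp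
      have fi: "smooth (pd i f)" and gi: "smooth (pd i g)" using f g smooth_pd by auto
      have "pdl is (\<lambda>x. f x * g x) = pdl js (pd i (\<lambda>x. f x * g x))"
        using snoc pdl_append[of js "[i]"] by simp
      also have "\<dots> = pdl js (\<lambda>x. pd i f x * g x + f x * pd i g x)"
        using f g by (simp add: pd_mult smooth_diff)
      also have "\<dots> = (\<lambda>x. pdl js (\<lambda>x. pd i f x * g x) x + pdl js (\<lambda>x. f x * pd i g x) x)"
        apply (rule pdl_add_weak)
        using Suc.IH fi gi f g ljs by (meson le_trans less_imp_le_nat)
      finally show ?thesis
        using Suc.IH fi gi f g ljs by (auto intro!: differentiable_add)
    qed
  qed
qed

lemma smooth_mult: "smooth f \<Longrightarrow> smooth g \<Longrightarrow> smooth (\<lambda>x. f x * g x)"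
  unfolding smooth_def using smooth_mult_aux[unfolded smooth_def] by blast

lemma smooth_cmult: "smooth f \<Longrightarrow> smooth (\<lambda>x. c * f x)"
  using smooth_mult[OF smooth_const] by blast

lemma smooth_minus: "smooth f \<Longrightarrow> smooth g \<Longrightarrow> smooth (\<lambda>x. f x - g x)"
  using smooth_add[of f "\<lambda>x. (-1) * g x"] smooth_cmult[of g "-1"] by simp

lemma smooth_sum: "finite K \<Longrightarrow> (\<And>k. k \<in> K \<Longrightarrow> smooth (F k)) \<Longrightarrow> smooth (\<lambda>x. \<Sum>k\<in>K. F k x)"
  by (induction K rule: finite_induct) (auto simp: smooth_const intro!: smooth_add)

lemma pdl_cmult: "smooth f \<Longrightarrow> pdl is (\<lambda>x. c * f x) = (\<lambda>x. c * pdl is f x)"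
proof (induction "is")
  case Nil then show ?case by simp
next
  case (Cons i "is")
  then have "pdl (i#is) (\<lambda>x. c * f x) = pd i (\<lambda>x. c * pdl is f x)" by simp
  also have "\<dots> = (\<lambda>x. pd i (\<lambda>x. c) x * pdl is f x + c * pd i (pdl is f) x)"
    using Cons.prems by (simp add: pd_mult smooth_diff smooth_pdl)
  finally show ?case by (simp add: pd_const)
qed

lemma pdl_zero: "pdl is (\<lambda>x. 0) = (\<lambda>x. 0)"
  by (induction "is") (auto simp: pd_const)

lemma pdl_sum: "finite K \<Longrightarrow> (\<And>k. k \<in> K \<Longrightarrow> smooth (F k)) \<Longrightarrow>
   pdl is (\<lambda>x. \<Sum>k\<in>K. F k x) = (\<lambda>x. \<Sum>k\<in>K. pdl is (F k) x)"
proof (induction K rule: finite_induct)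
  case empty
  then show ?case by (simp add: pdl_zero)
next
  case (insert k K)
  then show ?case by (simp add: pdl_add smooth_sum)
qed



lemma bidiff_smooth:
  assumes "bidiff_op B" "smooth f" "smooth g"
  shows "smooth (B f g)"
proof -
  obtain T a where T: "finite T" "\<forall>p\<in>T. smooth (a p)"
    "\<forall>f g. smooth f \<longrightarrow> smooth g \<longrightarrow>
        B f g = (\<lambda>x. \<Sum>(is, js)\<in>T. a (is, js) x * pdl is f x * pdl js g x)"
    using assms(1) unfolding bidiff_op_def by blast
  have "B f g = (\<lambda>x. \<Sum>p\<in>T. a p x * pdl (fst p) f x * pdl (snd p) g x)"
    using T(3) assms by (simp add: split_def)
  moreover have "smooth (\<lambda>x. \<Sum>p\<in>T. a p x * pdl (fst p) f x * pdl (snd p) g x)"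
    using T(1,2) assms by (auto intro!: smooth_sum smooth_mult smooth_pdl)
  ultimately show ?thesis by simp
qed

lemma bidiff_rep:
  assumes "bidiff_op B"
  obtains T a where "finite T" "\<forall>p\<in>T. smooth (a p)"
    "\<And>f g. smooth f \<Longrightarrow> smooth g \<Longrightarrow>
        B f g = (\<lambda>x. \<Sum>p\<in>T. a p x * pdl (fst p) f x * pdl (snd p) g x)"
proof -
  obtain T a where T: "finite T" "\<forall>p\<in>T. smooth (a p)"
    "\<forall>f g. smooth f \<longrightarrow> smooth g \<longrightarrow>
        B f g = (\<lambda>x. \<Sum>(is, js)\<in>T. a (is, js) x * pdl is f x * pdl js g x)"
    using assms(1) unfolding bidiff_op_def by blast
  then show ?thesis using that[of T a] by (simp add: split_def)
qed

lemma bidiff_lin2: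
  assumes "bidiff_op B" "smooth f" "smooth g" "smooth h"
  shows "B f (\<lambda>x. a * g x + b * h x) = (\<lambda>x. a * B f g x + b * B f h x)"
proof -
  obtain T c where T: "finite T" "\<forall>p\<in>T. smooth (c p)"
    "\<And>f g. smooth f \<Longrightarrow> smooth g \<Longrightarrow>
        B f g = (\<lambda>x. \<Sum>p\<in>T. c p x * pdl (fst p) f x * pdl (snd p) g x)"
    using bidiff_rep[OF assms(1)] by blast
  have s: "smooth (\<lambda>x. a * g x + b * h x)" using assms by (auto intro!: smooth_add smooth_cmult)
  have e: "pdl js (\<lambda>x. a * g x + b * h x) = (\<lambda>x. a * pdl js g x + b * pdl js h x)" for js
    using assms by (simp add: pdl_add pdl_cmult smooth_cmult)
  show ?thesis
    using assms s by (simp add: T(3) e sum.distrib sum_distrib_left algebra_simps)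
qed

lemma bidiff_lin1:
  assumes "bidiff_op B" "smooth f" "smooth g" "smooth h"
  shows "B (\<lambda>x. a * g x + b * h x) f = (\<lambda>x. a * B g f x + b * B h f x)"
proof -
  obtain T c where T: "finite T" "\<forall>p\<in>T. smooth (c p)"
    "\<And>f g. smooth f \<Longrightarrow> smooth g \<Longrightarrow>
        B f g = (\<lambda>x. \<Sum>p\<in>T. c p x * pdl (fst p) f x * pdl (snd p) g x)"
    using bidiff_rep[OF assms(1)] by blast
  have s: "smooth (\<lambda>x. a * g x + b * h x)" using assms by (auto intro!: smooth_add smooth_cmult)
  have e: "pdl js (\<lambda>x. a * g x + b * h x) = (\<lambda>x. a * pdl js g x + b * pdl js h x)" for js
    using assms by (simp add: pdl_add pdl_cmult smooth_cmult)
  show ?thesis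
    using assms s by (simp add: T(3) e sum.distrib sum_distrib_left algebra_simps)
qed

lemma bidiff_vanish:
  fixes B :: "'n::finite fn \<Rightarrow> 'n fn \<Rightarrow> 'n fn"
  assumes "bidiff_op B"
  obtains m where "\<And>f g x. smooth f \<Longrightarrow> smooth g \<Longrightarrow> (\<forall>js. length js < m \<longrightarrow> pdl js g x = 0) \<Longrightarrow> B f g x = 0"
    "\<And>f g x. smooth f \<Longrightarrow> smooth g \<Longrightarrow> (\<forall>js. length js < m \<longrightarrow> pdl js f x = 0) \<Longrightarrow> B f g x = 0"
proof -
  obtain T c where T: "finite T" "\<forall>p\<in>T. smooth (c p)"
    "\<And>f g. smooth f \<Longrightarrow> smooth g \<Longrightarrow>
        B f g = (\<lambda>x. \<Sum>p\<in>T. c p x * pdl (fst p) f x * pdl (snd p) g x)"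
    using bidiff_rep[OF assms(1)] by blast
  define m where "m = Suc (Max ((\<lambda>p. length (fst p) + length (snd p)) ` T))"
  have lm: "length (fst p) < m \<and> length (snd p) < m" if "p \<in> T" for p
  proof -
    have "length (fst p) + length (snd p) \<le> Max ((\<lambda>p. length (fst p) + length (snd p)) ` T)"
      using T(1) that by (intro Max_ge) auto
    then show ?thesis unfolding m_def by linarith
  qed
  show ?thesis
  proof (rule that[of m])
    fix f g :: "'n fn" and x assume "smooth f" "smooth g" "\<forall>js. length js < m \<longrightarrow> pdl js g x = 0"
    then show "B f g x = 0" using lm by (simp add: T(3))
  next
    fix f g :: "'n fn" and x assume "smooth f" "smooth g" "\<forall>js. length js < m \<longrightarrow> pdl js f x = 0"
    then show "B f g x = 0" using lm by (simp add: T(3))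
  qed
qed



declare One_nat_def[simp del]

definition pm :: "'n::finite multiset \<Rightarrow> 'n fn" where "pm M = (\<lambda>x. \<Prod>i\<in>#M. x $ i)"

lemma pm_empty[simp]: "pm {#} = (\<lambda>x. 1)" by (simp add: pm_def)
lemma pm_add_mset[simp]: "pm (add_mset i M) = (\<lambda>x. x $ i * pm M x)" by (simp add: pm_def)
lemma pm_union: "pm (M + N) = (\<lambda>x. pm M x * pm N x)" by (simp add: pm_def)

lemma smooth_coord': "smooth (\<lambda>x. x $ i)"
  using smooth_coord[of i] by (simp add: coord_def)

lemma smooth_pm: "smooth (pm M)"
  by (induction M) (auto simp: smooth_const intro!: smooth_mult smooth_coord')

lemma smooth_xpm: "smooth (\<lambda>x. x $ i * pm M x)"
  using smooth_pm[of "add_mset i M"] by simp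

locale SP =
  fixes P :: "'n::finite fn \<Rightarrow> 'n fn \<Rightarrow> 'n fn" and C :: "nat \<Rightarrow> 'n fn \<Rightarrow> 'n fn \<Rightarrow> 'n fn"
  assumes pb: "poisson_bracket P" and sp: "star_product P C"
begin

lemma C_bidiff: "bidiff_op (C r)" using sp unfolding star_product_def by blast

lemma C0: "smooth f \<Longrightarrow> smooth g \<Longrightarrow> C 0 f g = (\<lambda>x. f x * g x)"
  using sp unfolding star_product_def by blast

lemma C1_const1: "smooth f \<Longrightarrow> C 1 f (\<lambda>_. c) = (\<lambda>_. 0)"
  using sp unfolding star_product_def by (meson order_refl)

lemma C1_const2: "smooth f \<Longrightarrow> C 1 (\<lambda>_. c) f = (\<lambda>_. 0)"
  using sp unfolding star_product_def by (meson order_refl)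

lemma C_smooth: "smooth f \<Longrightarrow> smooth g \<Longrightarrow> smooth (C r f g)"
  by (rule bidiff_smooth[OF C_bidiff])

lemma C1_cocycle:
  assumes "smooth f" "smooth g" "smooth h"
  shows "C 1 f g x * h x + C 1 (\<lambda>x. f x * g x) h x = f x * C 1 g h x + C 1 f (\<lambda>x. g x * h x) x"
proof -
  have "(\<lambda>x. \<Sum>s\<le>1. C s (C (1 - s) f g) h x) = (\<lambda>x. \<Sum>s\<le>1. C s f (C (1 - s) g h) x)"
    using sp assms unfolding star_product_def by blast
  then have e: "(\<Sum>s\<le>1. C s (C (1 - s) f g) h x) = (\<Sum>s\<le>1. C s f (C (1 - s) g h) x)"
    by (rule fun_cong)
  have a: "{..1::nat} = {0,1}" by auto
  from e show ?thesis using assms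
    by (simp add: a C0 C_smooth algebra_simps)
qed

lemma P_eq: "smooth f \<Longrightarrow> smooth g \<Longrightarrow> P f g x = (C 1 f g x - C 1 g f x) / 2"
proof -
  assume "smooth f" "smooth g"
  then have "(\<lambda>x. C 1 f g x - C 1 g f x) = (\<lambda>x. 2 * P f g x)"
    using sp unfolding star_product_def by blast
  then have "C 1 f g x - C 1 g f x = 2 * P f g x" by (rule fun_cong)
  then show ?thesis by simp
qed

lemma P_smooth: "smooth f \<Longrightarrow> smooth g \<Longrightarrow> smooth (P f g)"
  using pb unfolding poisson_bracket_def by blast

lemma P_antisym: "smooth f \<Longrightarrow> smooth g \<Longrightarrow> P f g x = - P g f x"
proof -
  assume a: "smooth f" "smooth g"
  show ?thesis using P_eq[OF a, of x] P_eq[OF a(2,1), of x] by (simp add: minus_divide_left)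
qed

lemma P_leibniz: "smooth f \<Longrightarrow> smooth g \<Longrightarrow> smooth h \<Longrightarrow>
   P f (\<lambda>x. g x * h x) x = P f g x * h x + g x * P f h x"
proof -
  assume "smooth f" "smooth g" "smooth h"
  then have "P f (\<lambda>x. g x * h x) = (\<lambda>x. P f g x * h x + g x * P f h x)"
    using pb unfolding poisson_bracket_def by blast
  then show ?thesis by (rule fun_cong)
qed

lemma P_one: "smooth f \<Longrightarrow> P f (\<lambda>x. 1) x = 0"
  by (simp add: P_eq smooth_const C1_const1 C1_const2)

definition S where "S f g = (\<lambda>x. (C 1 f g x + C 1 g f x) / 2)"

lemma S_sym: "S f g = S g f" by (simp add: S_def add.commute)

lemma S_eq: "smooth f \<Longrightarrow> smooth g \<Longrightarrow> S f g x = C 1 f g x - P f g x"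
  by (simp add: S_def P_eq field_simps)

lemma S_smooth: "smooth f \<Longrightarrow> smooth g \<Longrightarrow> smooth (S f g)"
  unfolding S_def using smooth_cmult[of "\<lambda>x. C 1 f g x + C 1 g f x" "1/2"]
  by (simp add: smooth_add C_smooth)

lemma S_one: "smooth f \<Longrightarrow> S f (\<lambda>x. 1) = (\<lambda>x. 0)"
  by (simp add: S_def smooth_const C1_const1 C1_const2)

lemma S_one': "smooth f \<Longrightarrow> S (\<lambda>x. 1) f = (\<lambda>x. 0)"
  by (simp add: S_def smooth_const C1_const1 C1_const2)

lemma S_cocycle:
  assumes "smooth f" "smooth g" "smooth h"
  shows "S f g x * h x + S (\<lambda>x. f x * g x) h x = f x * S g h x + S f (\<lambda>x. g x * h x) x"
proof -
  have c1: "C 1 f g x * h x + C 1 (\<lambda>x. f x * g x) h x = f x * C 1 g h x + C 1 f (\<lambda>x. g x * h x) x"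
    using C1_cocycle assms by blast
  have c2: "C 1 h g x * f x + C 1 (\<lambda>x. h x * g x) f x = h x * C 1 g f x + C 1 h (\<lambda>x. g x * f x) x"
    using C1_cocycle assms by blast
  have e1: "(\<lambda>x. h x * g x) = (\<lambda>x. g x * h x)" "(\<lambda>x. g x * f x) = (\<lambda>x. f x * g x)"
    by (auto simp: mult.commute)
  show ?thesis using c1 c2 unfolding S_def e1 by (simp add: field_simps)
qed

lemma S_lin2:
  assumes "smooth f" "smooth g" "smooth h"
  shows "S f (\<lambda>x. a * g x + b * h x) x = a * S f g x + b * S f h x"
  using assms by (simp add: S_def bidiff_lin1[OF C_bidiff] bidiff_lin2[OF C_bidiff] field_simps)

lemma S_lin1:
  assumes "smooth f" "smooth g" "smooth h"
  shows "S (\<lambda>x. a * g x + b * h x) f x = a * S g f x + b * S h f x"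
  using S_lin2[OF assms, of a b] by (simp add: S_sym)

fun PhiS :: "'n list \<Rightarrow> 'n fn" where
  "PhiS [] = (\<lambda>x. 0)"
| "PhiS (i # w) = (\<lambda>x. x $ i * PhiS w x + S (coord i) (pm (mset w)) x)"

fun PhiA :: "'n list \<Rightarrow> 'n fn" where
  "PhiA [] = (\<lambda>x. 0)"
| "PhiA (i # w) = (\<lambda>x. x $ i * PhiA w x + P (coord i) (pm (mset w)) x)"

fun PhiC :: "'n list \<Rightarrow> 'n fn" where
  "PhiC [] = (\<lambda>x. 0)"
| "PhiC (i # w) = (\<lambda>x. x $ i * PhiC w x + C 1 (coord i) (pm (mset w)) x)"

lemma starw0: "starw C (map coord w) 0 = pm (mset w)"
  by (induction w) (auto simp: C0 smooth_coord' smooth_pm coord_def)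

lemma PhiC_smooth: "smooth (PhiC w)"
  by (induction w) (auto intro!: smooth_add smooth_mult smooth_coord' C_smooth smooth_pm smooth_coord
      simp: smooth_const)

lemma starw1: "starw C (map coord w) 1 = PhiC w"
proof (induction w)
  case Nil then show ?case by simp
next
  case (Cons i w)
  have a: "{..1::nat} = {0,1}" by auto
  show ?case using Cons
    by (simp add: a starw0 C0 PhiC_smooth smooth_coord) (simp add: coord_def)
qed

lemma PhiC_split: "PhiC w x = PhiS w x + PhiA w x"
  by (induction w) (auto simp: S_eq smooth_coord smooth_pm smooth_xpm algebra_simps)

lemma PhiA_snoc: "PhiA (w @ [j]) x = PhiA w x * x $ j + P (pm (mset w)) (coord j) x"
proof (induction w)
  case Nil
  then show ?case using P_one[of "coord j" x] P_antisym[of "coord j" "\<lambda>x. 1" x]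
    by (simp add: smooth_coord smooth_const)
next
  case (Cons i w)
  have l1: "P (coord i) (\<lambda>x. pm (mset w) x * coord j x) x = P (coord i) (pm (mset w)) x * coord j x + pm (mset w) x * P (coord i) (coord j) x"
    by (rule P_leibniz) (auto simp: smooth_coord smooth_pm)
  have l2: "P (coord j) (\<lambda>x. coord i x * pm (mset w) x) x = P (coord j) (coord i) x * pm (mset w) x + coord i x * P (coord j) (pm (mset w)) x"
    by (rule P_leibniz) (auto simp: smooth_coord smooth_pm)
  have e1: "pm (mset (w @ [j])) = (\<lambda>x. pm (mset w) x * coord j x)"
    by (simp add: coord_def mult.commute)
  have e2: "pm (mset (i # w)) = (\<lambda>x. coord i x * pm (mset w) x)"
    by (simp add: coord_def)
  have a1: "P (pm (mset (i # w))) (coord j) x = - P (coord j) (pm (mset (i # w))) x"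
    by (rule P_antisym) (auto simp: smooth_coord smooth_pm smooth_xpm simp del: pm_add_mset)
  have a2: "P (pm (mset w)) (coord j) x = - P (coord j) (pm (mset w)) x"
    by (rule P_antisym) (auto simp: smooth_coord smooth_pm)
  have a3: "P (coord i) (coord j) x = - P (coord j) (coord i) x"
    by (rule P_antisym) (auto simp: smooth_coord smooth_pm)
  have "PhiA ((i # w) @ [j]) x = x $ i * PhiA (w @ [j]) x + P (coord i) (pm (mset (w @ [j]))) x"
    by simp
  also have "\<dots> = x $ i * (PhiA w x * x $ j + P (pm (mset w)) (coord j) x) + P (coord i) (pm (mset (w @ [j]))) x"
    using Cons by simp
  finally show ?case
    unfolding a1 unfolding e1 e2 l1 l2 using a2 a3 by (simp add: coord_def algebra_simps)
qed

lemma PhiA_rev: "PhiA (rev w) x = - PhiA w x"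
proof (induction w)
  case Nil then show ?case by simp
next
  case (Cons i w)
  have "P (pm (mset w)) (coord i) x = - P (coord i) (pm (mset w)) x"
    by (rule P_antisym) (auto simp: smooth_coord smooth_pm)
  then show ?case using Cons by (simp add: PhiA_snoc algebra_simps)
qed

lemma PhiS_append:
  "PhiS (u @ v) x = PhiS u x * pm (mset v) x + pm (mset u) x * PhiS v x + S (pm (mset u)) (pm (mset v)) x"
proof (induction u)
  case Nil
  then show ?case by (simp add: S_one' smooth_pm)
next
  case (Cons i u)
  have c: "S (coord i) (pm (mset u)) x * pm (mset v) x + S (\<lambda>x. coord i x * pm (mset u) x) (pm (mset v)) x
      = coord i x * S (pm (mset u)) (pm (mset v)) x + S (coord i) (\<lambda>x. pm (mset u) x * pm (mset v) x) x"
    by (rule S_cocycle) (auto simp: smooth_coord smooth_pm)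
  have e2: "pm (mset (i # u)) = (\<lambda>x. coord i x * pm (mset u) x)"
    by (simp add: coord_def)
  have e3: "pm (mset (u @ v)) = (\<lambda>x. pm (mset u) x * pm (mset v) x)"
    by (simp add: pm_union)
  show ?case
    apply (simp only: PhiS.simps append_Cons e3 Cons e2)
    using c by (simp add: coord_def algebra_simps)
qed

lemma PhiS_comm: "PhiS (u @ v) = PhiS (v @ u)"
  by (rule ext) (simp add: PhiS_append S_sym algebra_simps)

lemma PhiS_perm: "mset u = mset v \<Longrightarrow> PhiS u = PhiS v"
proof (induction u arbitrary: v)
  case Nil then show ?case by simp
next
  case (Cons i u)
  then have "i \<in> set v" by (metis list.set_intros(1) set_mset_mset)
  then obtain A B where v: "v = A @ i # B" by (meson split_list)
  have "PhiS v = PhiS ((i # B) @ A)" unfolding v by (rule PhiS_comm)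
  moreover have "mset u = mset (B @ A)" using Cons.prems v by simp
  ultimately show ?case using Cons.IH by (simp add: fun_eq_iff)
qed

lemma rho_mon1: "mset w = M \<Longrightarrow> rho_mon C 1 M = PhiS w"
proof -
  assume w: "mset w = M"
  let ?Q = "permutations_of_multiset M"
  have fin: "finite ?Q" by simp
  have cne: "card ?Q \<noteq> 0" using fin by (simp add: card_eq_0_iff)
  have A0: "(\<Sum>v\<in>?Q. PhiA v x) = 0" for x
  proof -
    have "(\<Sum>v\<in>?Q. PhiA v x) = (\<Sum>v\<in>rev ` ?Q. PhiA v x)" by simp
    also have "\<dots> = (\<Sum>v\<in>?Q. PhiA (rev v) x)"
      by (subst sum.reindex) (auto intro: inj_onI)
    also have "\<dots> = - (\<Sum>v\<in>?Q. PhiA v x)" by (simp add: PhiA_rev sum_negf)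
    finally show ?thesis by simp
  qed
  have S0: "(\<Sum>v\<in>?Q. PhiS v x) = real (card ?Q) * PhiS w x" for x
  proof -
    have "(\<Sum>v\<in>?Q. PhiS v x) = (\<Sum>v\<in>?Q. PhiS w x)"
      by (rule sum.cong) (auto dest!: permutations_of_multisetD intro!: fun_cong[OF PhiS_perm] simp: w)
    then show ?thesis by simp
  qed
  show ?thesis
    unfolding rho_mon_def starw1
    by (rule ext) (simp add: PhiC_split sum.distrib A0 S0 cne)
qed

end


definition lin :: "('n::finite multiset \<Rightarrow> 'n fn) \<Rightarrow> 'n pol \<Rightarrow> 'n fn" where
  "lin F p = (\<lambda>x. \<Sum>M\<in>Poly_Mapping.keys p. Poly_Mapping.lookup p M * F M x)"

lemma lin_superset:
  assumes "finite K" "Poly_Mapping.keys p \<subseteq> K"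
  shows "lin F p x = (\<Sum>M\<in>K. Poly_Mapping.lookup p M * F M x)"
  unfolding lin_def
  by (rule sum.mono_neutral_left) (use assms in \<open>auto simp: in_keys_iff\<close>)

lemma lin_add: "lin F (p + q) x = lin F p x + lin F q x"
proof -
  let ?K = "Poly_Mapping.keys p \<union> Poly_Mapping.keys q"
  have "lin F (p + q) x = (\<Sum>M\<in>?K. Poly_Mapping.lookup (p + q) M * F M x)"
    by (rule lin_superset) (use keys_add[of p q] in auto)
  also have "\<dots> = (\<Sum>M\<in>?K. Poly_Mapping.lookup p M * F M x) + (\<Sum>M\<in>?K. Poly_Mapping.lookup q M * F M x)"
    by (simp add: lookup_add algebra_simps sum.distrib)
  also have "\<dots> = lin F p x + lin F q x"
    using lin_superset[of ?K p F x] lin_superset[of ?K q F x] by simp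
  finally show ?thesis .
qed

lemma lin_single: "lin F (Poly_Mapping.single M c) x = c * F M x"
  by (simp add: lin_def)

lemma lin_zero: "lin F 0 x = 0"
  by (simp add: lin_def)

lemma poly_eval_lin: "poly_eval = lin pm"
  by (simp add: fun_eq_iff poly_eval_def lin_def pm_def)

lemma smooth_lin: "(\<And>M. smooth (F M)) \<Longrightarrow> smooth (lin F p)"
  unfolding lin_def by (auto intro!: smooth_sum smooth_cmult)

lemma pmap_induct:
  assumes "Q 0" "\<And>p a b. Q p \<Longrightarrow> Q (p + Poly_Mapping.single a b)"
  shows "Q p"
proof (induction p rule: update_induct)
  case const then show ?case using assms by simp
next
  case (update f a b)
  have "Poly_Mapping.update a b f = f + Poly_Mapping.single a b"
    using update(1) by (intro poly_mapping_eqI) (auto simp: lookup_update lookup_add lookup_single in_keys_iff when_def)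
  then show ?case using assms(2) update by simp
qed

context SP begin

abbreviation G where "G \<equiv> rho_mon C 1"

lemma G_union: "G (M + N) x = G M x * pm N x + pm M x * G N x + S (pm M) (pm N) x"
proof -
  obtain u v where u: "mset u = M" and v: "mset v = N" by (meson ex_mset)
  have "G (M + N) = PhiS (u @ v)" by (rule rho_mon1) (simp add: u v)
  then show ?thesis using rho_mon1[OF u] rho_mon1[OF v] by (simp add: PhiS_append u v)
qed

lemma G_empty: "G {#} x = 0"
  using rho_mon1[of "[]"] by simp

lemma PhiS_smooth: "smooth (PhiS w)"
  by (induction w) (auto intro!: smooth_add smooth_mult smooth_coord' S_smooth smooth_pm smooth_coord
      simp: smooth_const)

lemma G_smooth: "smooth (G M)"
  using rho_mon1 PhiS_smooth by (metis ex_mset)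

lemma rho_lin: "rho C 1 = lin G"
  by (simp add: fun_eq_iff rho_def lin_def)

lemma S_add1: "smooth f \<Longrightarrow> smooth g \<Longrightarrow> smooth h \<Longrightarrow> S (\<lambda>x. f x + g x) h x = S f h x + S g h x"
  using S_lin1[of h f g 1 1] by simp

lemma S_add2: "smooth f \<Longrightarrow> smooth g \<Longrightarrow> smooth h \<Longrightarrow> S h (\<lambda>x. f x + g x) x = S h f x + S h g x"
  using S_lin2[of h f g 1 1] by simp

lemma S_scal1: "smooth f \<Longrightarrow> smooth h \<Longrightarrow> S (\<lambda>x. c * f x) h x = c * S f h x"
  using S_lin1[of h f f c 0] by simp

lemma S_scal2: "smooth f \<Longrightarrow> smooth h \<Longrightarrow> S h (\<lambda>x. c * f x) x = c * S h f x"
  using S_lin2[of h f f c 0] by simp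

lemma S_zero1: "smooth h \<Longrightarrow> S (\<lambda>x. 0) h x = 0"
  using S_scal1[of h h 0] by simp

lemma S_zero2: "smooth h \<Longrightarrow> S h (\<lambda>x. 0) x = 0"
  using S_scal2[of h h 0] by simp

definition Dl where
  "Dl p q x = poly_eval p x * lin G q x - lin G (p * q) x + lin G p x * poly_eval q x
     + S (poly_eval p) (poly_eval q) x"

lemma pe_smooth: "smooth (poly_eval p)"
  unfolding poly_eval_lin by (rule smooth_lin) (rule smooth_pm)

lemma pe_add: "poly_eval (p + q) = (\<lambda>x. poly_eval p x + poly_eval q x)"
  by (simp add: poly_eval_lin fun_eq_iff lin_add)

lemma pe_zero: "poly_eval 0 = (\<lambda>x. 0)"
  by (simp add: poly_eval_lin fun_eq_iff lin_zero)

lemma pe_single: "poly_eval (Poly_Mapping.single M c) = (\<lambda>x. c * pm M x)"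
  by (simp add: poly_eval_lin fun_eq_iff lin_single)

lemma Dl_addL: "Dl (p + s) q x = Dl p q x + Dl s q x"
  unfolding Dl_def pe_add distrib_right lin_add
  by (simp add: S_add1 pe_smooth algebra_simps)

lemma Dl_addR: "Dl p (q + s) x = Dl p q x + Dl p s x"
  unfolding Dl_def pe_add distrib_left lin_add
  by (simp add: S_add2 pe_smooth algebra_simps)

lemma Dl_zeroL: "Dl 0 q x = 0"
  unfolding Dl_def pe_zero by (simp add: lin_zero S_zero1 pe_smooth)

lemma Dl_zeroR: "Dl p 0 x = 0"
  unfolding Dl_def pe_zero by (simp add: lin_zero S_zero2 pe_smooth)

lemma Dl_single: "Dl (Poly_Mapping.single M a) (Poly_Mapping.single N b) x = 0"
proof -
  have "S (\<lambda>x. a * pm M x) (\<lambda>x. b * pm N x) x = a * b * S (pm M) (pm N) x"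
    by (simp add: S_scal1 S_scal2 smooth_pm smooth_cmult)
  then show ?thesis
    unfolding Dl_def pe_single mult_single lin_single G_union
    by (simp add: algebra_simps)
qed

lemma Dl_eq0: "Dl p q x = 0"
proof (induction p rule: pmap_induct)
  case 1 then show ?case by (rule Dl_zeroL)
next
  case (2 p a b)
  have "Dl (Poly_Mapping.single a b) q x = 0"
  proof (induction q rule: pmap_induct)
    case 1 then show ?case by (rule Dl_zeroR)
  next
    case (2 q c d)
    then show ?case by (simp add: Dl_addR Dl_single)
  qed
  then show ?case using 2 by (simp add: Dl_addL)
qed

lemma part2: "(\<lambda>x. poly_eval p x * rho C 1 q x - rho C 1 (p * q) x + rho C 1 p x * poly_eval q x)
              = (\<lambda>x. P (poly_eval p) (poly_eval q) x - C 1 (poly_eval p) (poly_eval q) x)"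
proof
  fix x
  have "Dl p q x = 0" by (rule Dl_eq0)
  then show "poly_eval p x * rho C 1 q x - rho C 1 (p * q) x + rho C 1 p x * poly_eval q x
    = P (poly_eval p) (poly_eval q) x - C 1 (poly_eval p) (poly_eval q) x"
    unfolding Dl_def rho_lin using S_eq[OF pe_smooth pe_smooth, of p q x] by simp
qed

end


definition del :: "nat \<Rightarrow> 'a list \<Rightarrow> 'a list" where "del k xs = take k xs @ drop (Suc k) xs"
definition ins :: "nat \<Rightarrow> 'a \<Rightarrow> 'a list \<Rightarrow> 'a list" where "ins k b xs = take k xs @ b # drop k xs"

lemma del_Suc_Cons[simp]: "del (Suc k) (i # xs) = i # del k xs" by (simp add: del_def)
lemma del_0_Cons[simp]: "del 0 (i # xs) = xs" by (simp add: del_def)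
lemma length_del: "k < length xs \<Longrightarrow> length (del k xs) = length xs - 1" by (simp add: del_def)
lemma length_ins: "k \<le> length xs \<Longrightarrow> length (ins k b xs) = Suc (length xs)" by (simp add: ins_def)
lemma nth_ins: "k \<le> length xs \<Longrightarrow> ins k b xs ! k = b" by (simp add: ins_def nth_append)
lemma del_ins: "k \<le> length xs \<Longrightarrow> del k (ins k b xs) = xs"
  by (simp add: ins_def del_def)
lemma ins_del: assumes "k < length xs" "xs ! k = b" shows "ins k b (del k xs) = xs"
proof -
  have "take k (del k xs) = take k xs" "drop k (del k xs) = drop (Suc k) xs"
    using assms by (simp_all add: del_def)
  then show ?thesis using id_take_nth_drop[OF assms(1)] assms(2) by (simp add: ins_def)
qed
lemma mset_ins: "mset (ins k b xs) = add_mset b (mset xs)"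
proof -
  have "mset (take k xs) + mset (drop k xs) = mset xs"
    by (metis append_take_drop_id mset_append)
  then show ?thesis by (simp add: ins_def)
qed

lemma pd_lin: "pd i (\<lambda>y. y $ b - c) = (\<lambda>y. if i = b then 1 else 0)"
proof -
  have "pd i (\<lambda>y. y $ b - c) = (\<lambda>x. (\<lambda>h. h $ b - 0) (axis i (1::real)))"
    by (rule pd_eq, rule has_derivative_diff,
        rule bounded_linear_imp_has_derivative, rule bounded_linear_vec_nth, rule has_derivative_const)
  then show ?thesis by (simp add: axis_def)
qed

lemma smooth_aff: "smooth (\<lambda>y. y $ b - c)"
  using smooth_minus[OF smooth_coord' smooth_const] by blast

lemma pd_sum: "finite K \<Longrightarrow> (\<And>k. k \<in> K \<Longrightarrow> smooth (F k)) \<Longrightarrow>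
   pd i (\<lambda>x. \<Sum>k\<in>K. F k x) = (\<lambda>x. \<Sum>k\<in>K. pd i (F k) x)"
  using pdl_sum[of K F "[i]"] by simp

lemma aux_if: "(if P then 1 else 0) * (A::real) + B + T = B + ((if P then A else 0) + T)"
  by simp

lemma LL:
  assumes h: "smooth h"
  shows "pdl is (\<lambda>y. (y $ b - c) * h y) =
    (\<lambda>y. (y $ b - c) * pdl is h y + (\<Sum>k<length is. if is ! k = b then pdl (del k is) h y else 0))"
proof (induction "is")
  case Nil then show ?case by simp
next
  case (Cons i "is")
  define F where "F k = (if is ! k = b then pdl (del k is) h else (\<lambda>y. 0))" for k
  have sF: "smooth (F k)" for k using h by (simp add: F_def smooth_pdl smooth_const)
  have eF: "(\<Sum>k<length is. if is ! k = b then pdl (del k is) h y else 0) = (\<Sum>k<length is. F k y)" for y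
    by (auto simp: F_def intro!: sum.cong)
  have s1: "smooth (\<lambda>y. (y $ b - c) * pdl is h y)" using h by (intro smooth_mult smooth_aff smooth_pdl)
  have s2: "smooth (\<lambda>y. \<Sum>k<length is. F k y)" using sF by (intro smooth_sum) auto
  have "pdl (i # is) (\<lambda>y. (y $ b - c) * h y) = pd i (\<lambda>y. (y $ b - c) * pdl is h y + (\<Sum>k<length is. F k y))"
    using Cons eF by simp
  also have "\<dots> = (\<lambda>y. pd i (\<lambda>y. (y $ b - c) * pdl is h y) y + pd i (\<lambda>y. \<Sum>k<length is. F k y) y)"
    using s1 s2 by (simp add: pd_add smooth_diff)
  also have "\<dots> = (\<lambda>y. ((if i = b then 1 else 0) * pdl is h y + (y $ b - c) * pd i (pdl is h) y)
      + (\<Sum>k<length is. pd i (F k) y))"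
    using sF h by (simp add: pd_mult smooth_diff smooth_aff smooth_pdl pd_lin pd_sum)
  also have "\<dots> = (\<lambda>y. (y $ b - c) * pdl (i # is) h y + (\<Sum>k<length (i # is). if (i # is) ! k = b then pdl (del k (i # is)) h y else 0))"
  proof -
    have sh: "(\<Sum>k<length (i#is). if (i#is)!k = b then pdl (del k (i#is)) h y else 0)
      = (if i = b then pdl is h y else 0) + (\<Sum>k<length is. if is!k = b then pd i (pdl (del k is) h) y else 0)" for y
      by (simp only: length_Cons sum.lessThan_Suc_shift nth_Cons_0 nth_Cons_Suc del_0_Cons del_Suc_Cons pdl.simps)
    have pdF: "pd i (F k) y = (if is!k = b then pd i (pdl (del k is) h) y else 0)" for k y
      by (simp add: F_def pd_const)
    show ?thesis
      apply (rule ext)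
      apply (simp only: sh pdF pdl.simps)
      apply (rule aux_if)
      done
  qed
  finally show ?case .
qed

definition Op :: "nat \<Rightarrow> ('n::finite multiset \<Rightarrow> real) \<Rightarrow> 'n fn \<Rightarrow> (real^'n) \<Rightarrow> real" where
  "Op K c f x = (\<Sum>is\<in>{is. length is \<le> K}. c (mset is) / fact (length is) * pdl is f x)"

lemma finite_L: "finite {is::'a::finite list. length is \<le> K}"
  using finite_lists_length_le[of "UNIV::'a set" K] by simp

lemma reindex_ins:
  fixes F :: "'a::finite list \<Rightarrow> nat \<Rightarrow> real"
  shows "(\<Sum>is\<in>{is. length is \<le> Suc K}. \<Sum>k<length is. if is ! k = b then F is k else 0)
    = (\<Sum>js\<in>{js. length js \<le> K}. \<Sum>k\<in>{..length js}. F (ins k b js) k)"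
proof -
  let ?X = "{p. length (fst p) \<le> Suc K \<and> snd p < length (fst p) \<and> fst p ! snd p = b}"
  let ?Y = "{p. length (fst p) \<le> K \<and> snd p \<le> length (fst p)}"
  have fX: "finite (Sigma {is::'a list. length is \<le> Suc K} (\<lambda>is. {..<length is}))"
    using finite_L by auto
  have "(\<Sum>is\<in>{is. length is \<le> Suc K}. \<Sum>k<length is. if is ! k = b then F is k else 0)
      = (\<Sum>p\<in>Sigma {is. length is \<le> Suc K} (\<lambda>is. {..<length is}). if fst p ! snd p = b then F (fst p) (snd p) else 0)"
    by (subst sum.Sigma) (auto simp: finite_L split_def)
  also have "\<dots> = (\<Sum>p\<in>?X. F (fst p) (snd p))"
    using fX by (intro sum.mono_neutral_cong_right) auto
  also have "\<dots> = (\<Sum>p\<in>?Y. F (ins (snd p) b (fst p)) (snd p))"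
  proof -
    have bij: "bij_betw (\<lambda>p. (ins (snd p) b (fst p), snd p)) ?Y ?X"
    proof (rule bij_betwI[where g = "\<lambda>p. (del (snd p) (fst p), snd p)"])
      show "(\<lambda>p. (ins (snd p) b (fst p), snd p)) \<in> ?Y \<rightarrow> ?X"
        by (auto simp: length_ins nth_ins)
      show "(\<lambda>p. (del (snd p) (fst p), snd p)) \<in> ?X \<rightarrow> ?Y"
        by (auto simp: length_del)
      show "\<And>p. p \<in> ?Y \<Longrightarrow> (del (snd (ins (snd p) b (fst p), snd p)) (fst (ins (snd p) b (fst p), snd p)), snd (ins (snd p) b (fst p), snd p)) = p"
        by (auto simp: del_ins)
      show "\<And>p. p \<in> ?X \<Longrightarrow> (ins (snd (del (snd p) (fst p), snd p)) b (fst (del (snd p) (fst p), snd p)), snd (del (snd p) (fst p), snd p)) = p"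
        by (auto simp: ins_del)
    qed
    show ?thesis using sum.reindex_bij_betw[OF bij, of "\<lambda>p. F (fst p) (snd p)"] by simp
  qed
  also have "\<dots> = (\<Sum>p\<in>Sigma {js. length js \<le> K} (\<lambda>js. {..length js}). F (ins (snd p) b (fst p)) (snd p))"
    by (rule sum.cong) auto
  also have "\<dots> = (\<Sum>js\<in>{js. length js \<le> K}. \<Sum>k\<in>{..length js}. F (ins k b js) k)"
    by (subst sum.Sigma) (auto simp: finite_L split_def)
  finally show ?thesis .
qed

lemma Leib:
  assumes h: "smooth h"
  shows "Op (Suc K) c (\<lambda>y. y $ b * h y) x = x $ b * Op (Suc K) c h x + Op K (\<lambda>B. c (add_mset b B)) h x"
proof -
  have e: "(\<lambda>y. y $ b * h y) = (\<lambda>y. (y $ b - 0) * h y)" by simp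
  have "Op (Suc K) c (\<lambda>y. y $ b * h y) x = (\<Sum>is\<in>{is. length is \<le> Suc K}.
      c (mset is) / fact (length is) * (x $ b * pdl is h x + (\<Sum>k<length is. if is ! k = b then pdl (del k is) h x else 0)))"
    unfolding Op_def e LL[OF h] by simp
  also have "\<dots> = x $ b * Op (Suc K) c h x + (\<Sum>is\<in>{is. length is \<le> Suc K}.
      \<Sum>k<length is. c (mset is) / fact (length is) * (if is ! k = b then pdl (del k is) h x else 0))"
    unfolding Op_def by (simp add: algebra_simps sum.distrib sum_distrib_left)
  also have "(\<Sum>is\<in>{is. length is \<le> Suc K}.
      \<Sum>k<length is. c (mset is) / fact (length is) * (if is ! k = b then pdl (del k is) h x else 0))
     = (\<Sum>is\<in>{is. length is \<le> Suc K}.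
      \<Sum>k<length is. if is ! k = b then c (mset is) / fact (length is) * pdl (del k is) h x else 0)"
    by (rule sum.cong[OF refl], rule sum.cong[OF refl]) simp
  also have "(\<Sum>is\<in>{is. length is \<le> Suc K}.
      \<Sum>k<length is. if is ! k = b then c (mset is) / fact (length is) * pdl (del k is) h x else 0)
    = (\<Sum>js\<in>{js. length js \<le> K}. \<Sum>k\<in>{..length js}. c (mset (ins k b js)) / fact (length (ins k b js)) * pdl (del k (ins k b js)) h x)"
    by (rule reindex_ins)
  also have "\<dots> = (\<Sum>js\<in>{js. length js \<le> K}. \<Sum>k\<in>{..length js}. c (add_mset b (mset js)) / fact (Suc (length js)) * pdl js h x)"
    by (intro sum.cong refl) (simp add: mset_ins length_ins del_ins)
  also have "\<dots> = Op K (\<lambda>B. c (add_mset b B)) h x"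
    unfolding Op_def
  proof (intro sum.cong refl)
    fix js :: "'a list"
    define m where "m = real (Suc (length js))"
    have m: "m > 0" "fact (Suc (length js)) = m * fact (length js)" unfolding m_def by (simp_all add: fact_Suc)
    have "m * (c (add_mset b (mset js)) / fact (Suc (length js)) * pdl js h x)
       = c (add_mset b (mset js)) / fact (length js) * pdl js h x"
      unfolding m(2) using m(1) by (simp add: field_simps)
    then have "real (Suc (length js)) * (c (add_mset b (mset js)) / fact (Suc (length js)) * pdl js h x)
       = c (add_mset b (mset js)) / fact (length js) * pdl js h x" unfolding m_def .
    then show "(\<Sum>k\<in>{..length js}. c (add_mset b (mset js)) / fact (Suc (length js)) * pdl js h x) =
         c (add_mset b (mset js)) / fact (length js) * pdl js h x" by simp
  qed
  finally show ?thesis .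
qed

lemma Ext:
  assumes "\<And>B. size B = Suc K \<Longrightarrow> c B = 0"
  shows "Op (Suc K) c f x = Op K c f x"
  unfolding Op_def
  by (rule sum.mono_neutral_right) (auto simp: finite_L assms)

lemma pdl_const: "pdl is (\<lambda>y. a) = (if is = [] then (\<lambda>y. a) else (\<lambda>y. 0))"
  by (induction "is") (auto simp: pd_const)

lemma Op_const:
  fixes c :: "'n::finite multiset \<Rightarrow> real"
  shows "Op K c (\<lambda>y. a) x = c {#} * a"
proof -
  have "Op K c (\<lambda>y. a) x = (\<Sum>is\<in>{is::'n list. length is \<le> K}. if is = [] then c {#} * a else 0)"
    unfolding Op_def pdl_const by (rule sum.cong) auto
  also have "\<dots> = c {#} * a"
    by (subst sum.delta[OF finite_L]) simp
  finally show ?thesis .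
qed

lemma Op_sum:
  assumes "finite I" "\<And>i. smooth (f i)"
  shows "Op K c (\<lambda>y. \<Sum>i\<in>I. a i * f i y) x = (\<Sum>i\<in>I. a i * Op K c (f i) x)"
proof -
  have "pdl is (\<lambda>y. \<Sum>i\<in>I. a i * f i y) x = (\<Sum>i\<in>I. a i * pdl is (f i) x)" for "is"
    using assms by (simp add: pdl_sum smooth_cmult pdl_cmult)
  then show ?thesis
    unfolding Op_def by (simp add: sum_distrib_left algebra_simps sum.swap[of _ I])
qed



definition Tm :: "real^'n \<Rightarrow> 'n::finite \<Rightarrow> ('n multiset \<Rightarrow> real) \<Rightarrow> ('n multiset \<Rightarrow> real)" where
  "Tm x a F = (\<lambda>M. F (add_mset a M) - x $ a * F M)"

lemma Tm_commute: "comp_fun_commute (Tm x)"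
  unfolding comp_fun_commute_def by (auto simp: Tm_def fun_eq_iff algebra_simps add_mset_commute)

definition Q :: "real^'n \<Rightarrow> 'n::finite multiset \<Rightarrow> 'n multiset \<Rightarrow> 'n fn" where
  "Q x A M = (\<lambda>y. (\<Prod>a\<in>#A. y $ a - x $ a) * pm M y)"

lemma Q_empty: "Q x {#} M = pm M" by (simp add: Q_def)
lemma Q_addA: "Q x (add_mset a A) M = (\<lambda>y. (y $ a - x $ a) * Q x A M y)" by (simp add: Q_def mult.assoc)
lemma Q_addM: "Q x A (add_mset a M) = (\<lambda>y. y $ a * Q x A M y)" by (simp add: Q_def algebra_simps)
lemma smooth_Q: "smooth (Q x A M)"
  by (induction A) (auto simp: Q_empty Q_addA smooth_pm intro!: smooth_mult smooth_aff)

lemma fold_Q: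
  assumes L: "\<And>f g a b. smooth f \<Longrightarrow> smooth g \<Longrightarrow> L (\<lambda>y. a * f y + b * g y) = a * L f + b * L g"
  shows "fold_mset (Tm x) (\<lambda>M. L (pm M)) A M = L (Q x A M)"
proof (induction A arbitrary: M)
  case empty then show ?case by (simp add: Q_empty)
next
  case (add a A)
  have e: "Q x (add_mset a A) M = (\<lambda>y. 1 * Q x A (add_mset a M) y + (- x $ a) * Q x A M y)"
    by (simp add: Q_addA Q_addM fun_eq_iff algebra_simps)
  have "fold_mset (Tm x) (\<lambda>M. L (pm M)) (add_mset a A) M
     = fold_mset (Tm x) (\<lambda>M. L (pm M)) A (add_mset a M) - x $ a * fold_mset (Tm x) (\<lambda>M. L (pm M)) A M"
    by (simp add: comp_fun_commute.fold_mset_add_mset[OF Tm_commute] Tm_def)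
  also have "\<dots> = 1 * L (Q x A (add_mset a M)) + (- x $ a) * L (Q x A M)"
    using add by simp
  also have "\<dots> = L (Q x (add_mset a A) M)"
    unfolding e by (rule L[symmetric]) (rule smooth_Q)+
  finally show ?case .
qed

definition VO where "VO x m f \<longleftrightarrow> (\<forall>js. length js < m \<longrightarrow> pdl js f x = 0)"

lemma VO_mono: "VO x n f \<Longrightarrow> m \<le> n \<Longrightarrow> VO x m f"
  by (auto simp: VO_def)

lemma VO_Q: "VO x (size A) (Q x A M)"
proof (induction A)
  case empty then show ?case by (simp add: VO_def)
next
  case (add a A)
  show ?case unfolding VO_def
  proof (intro allI impI)
    fix js :: "'a list" assume l: "length js < size (add_mset a A)"
    have "pdl js (Q x (add_mset a A) M) x = (x $ a - x $ a) * pdl js (Q x A M) x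
       + (\<Sum>k<length js. if js ! k = a then pdl (del k js) (Q x A M) x else 0)"
      unfolding Q_addA LL[OF smooth_Q] by simp
    also have "\<dots> = 0"
    proof -
      have "(\<Sum>k<length js. if js ! k = a then pdl (del k js) (Q x A M) x else 0) = 0"
      proof (rule sum.neutral, intro ballI)
        fix k assume k: "k \<in> {..<length js}"
        then have "length (del k js) < size A" using l by (simp add: length_del)
        then show "(if js ! k = a then pdl (del k js) (Q x A M) x else 0) = 0"
          using add by (simp add: VO_def)
      qed
      then show ?thesis by simp
    qed
    finally show "pdl js (Q x (add_mset a A) M) x = 0" .
  qed
qed

context SP begin

definition H where "H x A = fold_mset (Tm x) (\<lambda>M. G M x) A"

lemma H_empty: "H x {#} M = G M x" by (simp add: H_def)

lemma H_add: "H x (add_mset b A) M = H x A (add_mset b M) - x $ b * H x A M"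
  by (simp add: H_def comp_fun_commute.fold_mset_add_mset[OF Tm_commute] Tm_def)

lemma H_smooth: "smooth (\<lambda>x. H x A M)"
proof (induction A arbitrary: M)
  case empty then show ?case using G_smooth by (simp add: H_empty)
next
  case (add b A)
  then show ?case
    by (simp add: H_add) (intro smooth_minus smooth_mult smooth_coord' add)
qed

lemma pm_single: "pm {#b#} = coord b" by (simp add: coord_def fun_eq_iff)

lemma G_add: "G (add_mset b M) x = x $ b * G M x + S (coord b) (pm M) x"
proof -
  have g1: "G {#b#} x = 0"
    using rho_mon1[of "[b]" "{#b#}"] by (simp add: S_one smooth_coord)
  have "G (add_mset b M) x = G ({#b#} + M) x" by simp
  also have "\<dots> = G {#b#} x * pm M x + pm {#b#} x * G M x + S (pm {#b#}) (pm M) x" by (rule G_union)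
  finally show ?thesis by (simp add: g1 pm_single coord_def)
qed

lemma H_Q: "H x (add_mset b A) M = S (coord b) (Q x A M) x"
proof -
  have "H x (add_mset b A) = fold_mset (Tm x) (Tm x b (\<lambda>M. G M x)) A"
    by (simp add: H_def comp_fun_commute.fold_mset_add_mset[OF Tm_commute]
        comp_fun_commute.fold_mset_fun_left_comm[OF Tm_commute])
  also have "Tm x b (\<lambda>M. G M x) = (\<lambda>M. S (coord b) (pm M) x)"
    by (simp add: Tm_def G_add fun_eq_iff)
  finally have "H x (add_mset b A) M = fold_mset (Tm x) (\<lambda>M. S (coord b) (pm M) x) A M" by simp
  also have "\<dots> = S (coord b) (Q x A M) x"
    by (rule fold_Q) (simp add: S_lin2 smooth_coord)
  finally show ?thesis .
qed

definition m0 where "m0 = (SOME m. \<forall>f g x. smooth f \<longrightarrow> smooth g \<longrightarrow>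
    ((\<forall>js. length js < m \<longrightarrow> pdl js g x = 0) \<longrightarrow> C 1 f g x = 0) \<and>
    ((\<forall>js. length js < m \<longrightarrow> pdl js f x = 0) \<longrightarrow> C 1 f g x = 0))"

lemma m0: "\<forall>f g x. smooth f \<longrightarrow> smooth g \<longrightarrow>
    ((\<forall>js. length js < m0 \<longrightarrow> pdl js g x = 0) \<longrightarrow> C 1 f g x = 0) \<and>
    ((\<forall>js. length js < m0 \<longrightarrow> pdl js f x = 0) \<longrightarrow> C 1 f g x = 0)"
proof -
  obtain m where m1: "\<And>f g x. smooth f \<Longrightarrow> smooth g \<Longrightarrow> (\<forall>js. length js < m \<longrightarrow> pdl js g x = 0) \<Longrightarrow> C 1 f g x = 0"
    and m2: "\<And>f g x. smooth f \<Longrightarrow> smooth g \<Longrightarrow> (\<forall>js. length js < m \<longrightarrow> pdl js f x = 0) \<Longrightarrow> C 1 f g x = 0"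
    by (rule bidiff_vanish[OF C_bidiff[of 1]], rule that, assumption+)
  have "\<exists>m. \<forall>f g x. smooth f \<longrightarrow> smooth g \<longrightarrow>
    ((\<forall>js. length js < m \<longrightarrow> pdl js g x = 0) \<longrightarrow> C 1 f g x = 0) \<and>
    ((\<forall>js. length js < m \<longrightarrow> pdl js f x = 0) \<longrightarrow> C 1 f g x = 0)"
    apply (rule exI[of _ m])
    apply (intro allI impI conjI)
     apply (rule m1; assumption)
    apply (rule m2; assumption)
    done
  then show ?thesis unfolding m0_def by (rule someI_ex)
qed

lemma S_vanish: assumes "smooth f" "VO x m0 f" shows "S (coord b) f x = 0"
proof -
  have v: "\<forall>js. length js < m0 \<longrightarrow> pdl js f x = 0" using assms(2) by (simp add: VO_def)
  have m: "((\<forall>js. length js < m0 \<longrightarrow> pdl js g x = 0) \<longrightarrow> C 1 f' g x = 0) \<and>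
    ((\<forall>js. length js < m0 \<longrightarrow> pdl js f' x = 0) \<longrightarrow> C 1 f' g x = 0)"
    if "smooth f'" "smooth g" for f' g
    by (rule m0[rule_format, OF that])
  have "C 1 (coord b) f x = 0" using m[OF smooth_coord[of b] assms(1)] v by simp
  moreover have "C 1 f (coord b) x = 0" using m[OF assms(1) smooth_coord[of b]] v by simp
  ultimately show ?thesis by (simp add: S_def)
qed

lemma H_vanish: "m0 < size A \<Longrightarrow> H x A M = 0"
proof -
  assume a: "m0 < size A"
  then have "A \<noteq> {#}" by auto
  then obtain b A' where A: "A = add_mset b A'" by (meson multi_nonempty_split)
  have "m0 \<le> size A'" using a A by simp
  then have "VO x m0 (Q x A' M)" by (rule VO_mono[OF VO_Q])
  then show ?thesis unfolding A H_Q by (rule S_vanish[OF smooth_Q])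
qed

definition N where "N = Suc m0"

lemma main_claim: "Op N (\<lambda>B. H x (A + B) {#}) (pm M) x = H x A M"
proof (induction M arbitrary: A)
  case empty
  show ?case by (simp add: Op_const)
next
  case (add b M)
  have "Op N (\<lambda>B. H x (A + B) {#}) (pm (add_mset b M)) x
      = x $ b * Op N (\<lambda>B. H x (A + B) {#}) (pm M) x + Op m0 (\<lambda>B. H x (A + add_mset b B) {#}) (pm M) x"
    unfolding N_def pm_add_mset by (rule Leib[OF smooth_pm])
  also have "(\<lambda>B. H x (A + add_mset b B) {#}) = (\<lambda>B. H x (add_mset b A + B) {#})" by simp
  also have "Op m0 (\<lambda>B. H x (add_mset b A + B) {#}) (pm M) x = Op N (\<lambda>B. H x (add_mset b A + B) {#}) (pm M) x"
    unfolding N_def by (rule Ext[symmetric]) (simp add: H_vanish)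
  finally have eq: "Op N (\<lambda>B. H x (A + B) {#}) (pm (add_mset b M)) x
      = x $ b * Op N (\<lambda>B. H x (A + B) {#}) (pm M) x + Op N (\<lambda>B. H x (add_mset b A + B) {#}) (pm M) x" .
  have "Op N (\<lambda>B. H x (A + B) {#}) (pm (add_mset b M)) x = x $ b * H x A M + H x (add_mset b A) M"
    using eq add.IH[of A] add.IH[of "add_mset b A"] by (simp only:)
  then show ?case using H_add[of x b A M] by simp
qed

definition Dop where "Dop f = (\<lambda>x. Op N (\<lambda>B. H x B {#}) f x)"

lemma part1: "\<exists>D. diff_op D \<and> (\<forall>c. D (\<lambda>_. c) = (\<lambda>_. 0)) \<and> (\<forall>p. rho C 1 p = D (poly_eval p))"
proof (intro exI conjI allI)
  show "diff_op Dop"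
    unfolding diff_op_def
  proof (intro exI conjI ballI allI impI)
    show "finite {is::'n list. length is \<le> N}" by (rule finite_L)
    show "smooth (\<lambda>x. H x (mset is) {#} / fact (length is))" for "is" :: "'n list"
      using smooth_cmult[OF H_smooth, of "1 / fact (length is)"] by simp
    show "Dop f = (\<lambda>x. \<Sum>is\<in>{is. length is \<le> N}. H x (mset is) {#} / fact (length is) * pdl is f x)" for f
      by (simp add: Dop_def Op_def)
  qed
  show "Dop (\<lambda>_. c) = (\<lambda>_. 0)" for c
    by (simp add: Dop_def Op_const H_empty G_empty)
  show "rho C 1 p = Dop (poly_eval p)" for p
  proof
    fix x
    have "Dop (poly_eval p) x = Op N (\<lambda>B. H x B {#}) (\<lambda>y. \<Sum>M\<in>Poly_Mapping.keys p. Poly_Mapping.lookup p M * pm M y) x"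
      by (simp add: Dop_def poly_eval_lin lin_def)
    also have "\<dots> = (\<Sum>M\<in>Poly_Mapping.keys p. Poly_Mapping.lookup p M * Op N (\<lambda>B. H x B {#}) (pm M) x)"
      by (rule Op_sum) (auto simp: smooth_pm)
    also have "\<dots> = (\<Sum>M\<in>Poly_Mapping.keys p. Poly_Mapping.lookup p M * G M x)"
      using main_claim[of x "{#}"] by (simp add: H_empty)
    finally show "rho C 1 p x = Dop (poly_eval p) x" by (simp add: rho_lin lin_def)
  qed
qed

end


theorem lemma3:
  fixes P :: "'n::finite fn \<Rightarrow> 'n fn \<Rightarrow> 'n fn"
    and C :: "nat \<Rightarrow> 'n fn \<Rightarrow> 'n fn \<Rightarrow> 'n fn"
  assumes "poisson_bracket P"
    and "star_product P C"
  shows "(\<exists>D. diff_op D \<and> (\<forall>c. D (\<lambda>_. c) = (\<lambda>_. 0)) \<and>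
              (\<forall>p. rho C 1 p = D (poly_eval p))) \<and>
         (\<forall>p q. (\<lambda>x. poly_eval p x * rho C 1 q x - rho C 1 (p * q) x + rho C 1 p x * poly_eval q x)
              = (\<lambda>x. P (poly_eval p) (poly_eval q) x - C 1 (poly_eval p) (poly_eval q) x))"
proof -
  interpret SP P C using assms by (rule SP.intro)
  show ?thesis using part1 part2 by blast
qed

end
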